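(* For $n\in\mathbb{N}_{\geq 1}$ let $c_n$ denote the minimal Colless index among all rooted binary trees with $n$ leaves, and let $k_n=\lceil\log_2(n)\rceil$. Then $$c_n=\sum_{i=0}^{k_n-2}\frac{s(2^{i-k_n+1}\cdot n)}{2^{i-k_n+1}},$$ where $s(x)=\min_{z\in\mathbb{Z}}|x-z|$ is the distance from $x$ to the nearest integer (an empty sum is $0$).
   Context: A rooted binary tree with $n\geq 2$ leaves is a rooted tree whose root has degree 2 and all other internal nodes have degree 3; for $n=1$ it is a single node. For an internal node $v$ with children $v_1,v_2$, let $\kappa(v_i)$ be the number of leaves descending from $v_i$ ($1$ if $v_i$ is a leaf). The Colless index of $T$ is $\mathcal{C}(T)=\sum_{v}|\kappa(v_1)-\kappa(v_2)|$ over all internal nodes $v$. *)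

theory Defs
  imports "HOL-Analysis.Analysis"
begin

datatype bintree = Leaf | Node bintree bintree

fun leaves :: "bintree \<Rightarrow> nat" where
  "leaves Leaf = 1"
| "leaves (Node l r) = leaves l + leaves r"

fun colless :: "bintree \<Rightarrow> nat" where
  "colless Leaf = 0"
| "colless (Node l r) =
     nat \<bar>int (leaves l) - int (leaves r)\<bar> + colless l + colless r"

definition min_colless :: "nat \<Rightarrow> nat" where
  "min_colless n = Min {colless t | t. leaves t = n}"

definition dist_int :: "real \<Rightarrow> real" where
  "dist_int x = (INF z::int. \<bar>x - of_int z\<bar>)"

end

theory Submission
  imports Defs
begin

definition hh :: "nat \<Rightarrow> nat \<Rightarrow> nat" where
  "hh j n = min (n mod 2^j) (2^j - n mod 2^j)"

definition TT :: "nat \<Rightarrow> nat" where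
  "TT n = (\<Sum>j\<in>{j. (2::nat)^j < n}. hh j n)"

lemma fin_pow: "finite {j. (2::nat)^j < n}"
proof (rule finite_subset[of _ "{..<n}"])
  show "{j. (2::nat)^j < n} \<subseteq> {..<n}"
    using less_exp less_trans by blast
qed simp

lemma hh0 [simp]: "hh 0 n = 0" by (simp add: hh_def)

lemma min2: "min (2*a) (2*P - 2*a) = 2 * min a (P - (a::nat))"
  by (auto simp: min_def)

lemma hh_even: "hh (Suc j) (2*m) = 2 * hh j m"
  unfolding hh_def by (simp add: mod_mult_mult1 min2)

lemma mod_odd: "(2*m+1) mod (2*P) = 2*(m mod P) + (1::nat)" if "P > 0"
  by (simp add: mod_mult2_eq)

lemma arith_odd1: "r < 2*Q \<Longrightarrow> min (2*r+1) (4*Q - (2*r+1)) = min r (2*Q - r) + (if Suc r = 2*Q then 0 else min (Suc r) (2*Q - Suc r))"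
proof (cases "r < Q")
  case True
  have f1: "min (2*r+1) (4*Q - (2*r+1)) = 2*r+1" using True by simp
  have f2: "min r (2*Q - r) = r" using True by simp
  have f3: "Suc r \<noteq> 2*Q" using True by simp
  have f4: "min (Suc r) (2*Q - Suc r) = Suc r" using True by simp
  show ?thesis using f1 f2 f3 f4 by simp
next
  case False
  assume a: "r < 2*Q"
  show ?thesis
  proof (cases "Suc r = 2*Q")
    case True
    obtain Q' where Q': "Q = Suc Q'" using True by (cases Q) auto
    then have "r = 2*Q'+1" using True by simp
    then show ?thesis using Q' by (simp add: min_def)
  next
    case F2: False
    have f1: "min (2*r+1) (4*Q - (2*r+1)) = 4*Q - (2*r+1)" using False a by simp
    have f2: "min r (2*Q - r) = 2*Q - r" using False a by simp
    have f4: "min (Suc r) (2*Q - Suc r) = 2*Q - Suc r" using False F2 a by simp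
    show ?thesis using f1 f2 f4 F2 False a by simp
  qed
qed

lemma hh_odd: "j \<ge> 1 \<Longrightarrow> hh (Suc j) (2*m+1) = hh j m + hh j (m+1)"
proof -
  assume j: "j \<ge> 1"
  define P where "P = (2::nat)^j"
  obtain Q where Q: "P = 2*Q" "Q \<ge> 1"
  proof
    show "P = 2 * 2^(j-1)" using j unfolding P_def by (cases j) auto
  qed simp
  define r where "r = m mod P"
  have rP: "r < P" using Q unfolding r_def by simp
  have e1: "(2*m+1) mod (2*P) = 2*r+1" unfolding r_def by (rule mod_odd) (use Q in simp)
  have e2: "(m+1) mod P = (if Suc r = P then 0 else Suc r)"
    using mod_Suc[of m P] by (simp add: r_def)
  have p2: "(2::nat)^Suc j = 2*P" by (simp add: P_def)
  have c1: "hh (Suc j) (2*m+1) = min (2*r+1) (2*P - (2*r+1))"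
    unfolding hh_def p2 e1 by (rule refl)
  have c2: "hh j m = min r (P - r)"
    unfolding hh_def P_def[symmetric] r_def[symmetric] by (rule refl)
  have c3: "hh j (m+1) = (if Suc r = P then 0 else min (Suc r) (P - Suc r))"
    unfolding hh_def P_def[symmetric] e2 by simp
  have rQ: "r < 2*Q" using rP Q by simp
  have f: "2*(2*Q) = 4*(Q::nat)" by simp
  show ?thesis unfolding c1 c2 c3 Q(1) f by (rule arith_odd1[OF rQ])
qed

lemma hh1_odd: "hh (Suc 0) (2*m+1) = 1"
  by (simp add: hh_def)

lemma set_even: "m \<ge> 1 \<Longrightarrow> {j. (2::nat)^j < 2*m} = insert 0 (Suc ` {j. 2^j < m})"
  apply (auto simp: image_iff)
  subgoal for j by (cases j) auto
  done

lemma aux_lt: "2*(X::nat) < Suc (2*m) \<Longrightarrow> X < Suc m" by simp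

lemma set_odd: "m \<ge> 1 \<Longrightarrow> {j. (2::nat)^j < 2*m+1} = insert 0 (Suc ` {j. 2^j < m+1})"
  apply (auto simp: image_iff)
  subgoal for j by (cases j) (auto dest: aux_lt)
  done

lemma TT0 [simp]: "TT 0 = 0" and TT1 [simp]: "TT 1 = 0"
  by (simp_all add: TT_def)

lemma TT_even: "m \<ge> 1 \<Longrightarrow> TT (2*m) = 2 * TT m"
proof -
  assume m: "m \<ge> 1"
  have "TT (2*m) = (\<Sum>j\<in>insert 0 (Suc ` {j. 2^j < m}). hh j (2*m))"
    unfolding TT_def using set_even[OF m] by simp
  also have "\<dots> = (\<Sum>j\<in>Suc ` {j. 2^j < m}. hh j (2*m))"
    by (subst sum.insert) (auto simp: fin_pow)
  also have "\<dots> = (\<Sum>j\<in>{j. 2^j < m}. hh (Suc j) (2*m))"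
    by (subst sum.reindex) auto
  also have "\<dots> = 2 * TT m" by (simp add: hh_even TT_def sum_distrib_left)
  finally show ?thesis .
qed

lemma TT_odd: "m \<ge> 1 \<Longrightarrow> TT (2*m+1) = TT m + TT (m+1) + 1"
proof -
  assume m: "m \<ge> 1"
  have X: "(\<Sum>j\<in>{j. 2^j < m+1}. hh j m) = TT m"
    unfolding TT_def
  proof (rule sum.mono_neutral_right)
    show "finite {j. (2::nat)^j < m+1}" by (rule fin_pow)
    show "{j. (2::nat)^j < m} \<subseteq> {j. 2^j < m+1}" by auto
    show "\<forall>i\<in>{j. (2::nat)^j < m+1} - {j. 2^j < m}. hh i m = 0"
    proof
      fix i assume "i \<in> {j. (2::nat)^j < m+1} - {j. 2^j < m}"
      then have "2^i = m" by auto
      then show "hh i m = 0" by (auto simp: hh_def)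
    qed
  qed
  have "TT (2*m+1) = (\<Sum>j\<in>insert 0 (Suc ` {j. 2^j < m+1}). hh j (2*m+1))"
    unfolding TT_def using set_odd[OF m] by simp
  also have "\<dots> = (\<Sum>j\<in>Suc ` {j. 2^j < m+1}. hh j (2*m+1))"
    by (subst sum.insert) (auto simp: fin_pow)
  also have "\<dots> = (\<Sum>j\<in>{j. 2^j < m+1}. hh (Suc j) (2*m+1))"
    by (subst sum.reindex) auto
  also have "\<dots> = (\<Sum>j\<in>{j. 2^j < m+1}. hh j m + hh j (m+1) + (if j = 0 then 1 else 0))"
  proof (rule sum.cong[OF refl])
    fix j assume "j \<in> {j. (2::nat)^j < m+1}"
    show "hh (Suc j) (2*m+1) = hh j m + hh j (m+1) + (if j = 0 then 1 else 0)"
    proof (cases "j = 0")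
      case True then show ?thesis using hh1_odd[of m] by simp
    next
      case False then show ?thesis using hh_odd[of j m] by simp
    qed
  qed
  also have "\<dots> = (\<Sum>j\<in>{j. 2^j < m+1}. hh j m) + TT (m+1) + 1"
    using m by (simp add: sum.distrib TT_def fin_pow)
  also have "\<dots> = TT m + TT (m+1) + 1" using X by simp
  finally show ?thesis .
qed

lemma TT_Suc0 [simp]: "TT (Suc 0) = 0" by (simp add: TT_def)

lemma TT2 [simp]: "TT 2 = 0" using TT_even[of 1] by simp

lemma TT_Suc_Suc0 [simp]: "TT (Suc (Suc 0)) = 0" using TT2 by (simp add: numeral_2_eq_2)

lemma TT_even': "m \<ge> 1 \<Longrightarrow> n = 2*m \<Longrightarrow> int (TT n) = 2 * int (TT m)"
  using TT_even by simp

lemma TT_odd': "m \<ge> 1 \<Longrightarrow> n = 2*m+1 \<Longrightarrow> int (TT n) = int (TT m) + int (TT (m+1)) + 1"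
  using TT_odd by simp

lemma TT_sub: "int (TT (a+b)) \<le> int (TT a) + int (TT b) + \<bar>int a - int b\<bar>"
proof (induction "a+b" arbitrary: a b rule: less_induct)
  case less
  show ?case
  proof (cases "a = 0 \<or> b = 0")
    case True then show ?thesis by auto
  next
    case False
    then have a1: "a \<ge> 1" and b1: "b \<ge> 1" by auto
    obtain x where x: "a = 2*x \<or> a = 2*x+1" by (metis oddE evenE)
    obtain y where y: "b = 2*y \<or> b = 2*y+1" by (metis oddE evenE)
    show ?thesis
    proof (cases "a = 2*x")
      case ax: True
      with a1 have x1: "x \<ge> 1" by simp
      have Ta: "int (TT a) = 2 * int (TT x)" using TT_even' x1 ax by blast
      show ?thesis
      proof (cases "b = 2*y")
        case bb: True
        with b1 have y1: "y \<ge> 1" by simp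
        have h: "int (TT (x+y)) \<le> int (TT x) + int (TT y) + \<bar>int x - int y\<bar>"
          using less(1)[of x y] ax bb x1 by simp
        have Tb: "int (TT b) = 2 * int (TT y)" using TT_even' y1 bb by blast
        have Tab: "int (TT (a+b)) = 2 * int (TT (x+y))" using TT_even'[of "x+y" "a+b"] ax bb x1 by simp
        have "\<bar>int a - int b\<bar> = 2 * \<bar>int x - int y\<bar>" using ax bb by (simp add: abs_if)
        then show ?thesis using h Ta Tb Tab by (smt (verit))
      next
        case False
        with y have bb: "b = 2*y+1" by simp
        show ?thesis
        proof (cases "y = 0")
          case True
          have h: "int (TT (x+1)) \<le> int (TT x) + int (TT 1) + \<bar>int x - int 1\<bar>"
            using less(1)[of x 1] ax x1 bb True by simp
          have Tab: "int (TT (a+b)) = int (TT x) + int (TT (x+1)) + 1"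
            using TT_odd'[of x "a+b"] ax bb True x1 by simp
          have "\<bar>int a - int b\<bar> = 2 * int x - 1" using ax bb True x1 by simp
          moreover have "\<bar>int x - int 1\<bar> = int x - 1" using x1 by simp
          ultimately show ?thesis using h Ta Tab bb True by simp
        next
          case False
          then have y1: "y \<ge> 1" by simp
          have h1: "int (TT (x+y)) \<le> int (TT x) + int (TT y) + \<bar>int x - int y\<bar>"
            using less(1)[of x y] ax bb x1 by simp
          have h2: "int (TT (x+(y+1))) \<le> int (TT x) + int (TT (y+1)) + \<bar>int x - int (y+1)\<bar>"
            using less(1)[of x "y+1"] ax bb x1 by simp
          have Tb: "int (TT b) = int (TT y) + int (TT (y+1)) + 1" using TT_odd' y1 bb by blast
          have Tab: "int (TT (a+b)) = int (TT (x+y)) + int (TT (x+y+1)) + 1"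
            using TT_odd'[of "x+y" "a+b"] ax bb x1 by simp
          have "\<bar>int x - int y\<bar> + \<bar>int x - int (y+1)\<bar> = \<bar>int a - int b\<bar>"
            using ax bb by simp
          then show ?thesis using h1 h2 Ta Tb Tab by (simp add: add.assoc)
        qed
      qed
    next
      case False
      with x have ax: "a = 2*x+1" by simp
      show ?thesis
      proof (cases "b = 2*y")
        case bb: True
        with b1 have y1: "y \<ge> 1" by simp
        have Tb: "int (TT b) = 2 * int (TT y)" using TT_even' y1 bb by blast
        show ?thesis
        proof (cases "x = 0")
          case True
          have h: "int (TT (y+1)) \<le> int (TT y) + int (TT 1) + \<bar>int y - int 1\<bar>"
            using less(1)[of y 1] bb y1 ax True by simp
          have Tab: "int (TT (a+b)) = int (TT y) + int (TT (y+1)) + 1"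
            using TT_odd'[of y "a+b"] ax bb True y1 by simp
          have "\<bar>int a - int b\<bar> = 2 * int y - 1" using ax bb True y1 by simp
          moreover have "\<bar>int y - int 1\<bar> = int y - 1" using y1 by simp
          ultimately show ?thesis using h Tb Tab ax True by simp
        next
          case False
          then have x1: "x \<ge> 1" by simp
          have h1: "int (TT (x+y)) \<le> int (TT x) + int (TT y) + \<bar>int x - int y\<bar>"
            using less(1)[of x y] ax bb y1 by simp
          have h2: "int (TT ((x+1)+y)) \<le> int (TT (x+1)) + int (TT y) + \<bar>int (x+1) - int y\<bar>"
            using less(1)[of "x+1" y] ax bb y1 by simp
          have Ta: "int (TT a) = int (TT x) + int (TT (x+1)) + 1" using TT_odd' x1 ax by blast
          have Tab: "int (TT (a+b)) = int (TT (x+y)) + int (TT (x+y+1)) + 1"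
            using TT_odd'[of "x+y" "a+b"] ax bb x1 by simp
          have e: "x + 1 + y = x + y + 1" by simp
          have "\<bar>int x - int y\<bar> + \<bar>int (x+1) - int y\<bar> = \<bar>int a - int b\<bar>"
            using ax bb by simp
          moreover from h2 have "int (TT (x+y+1)) \<le> int (TT (x+1)) + int (TT y) + \<bar>int (x+1) - int y\<bar>"
            by (simp only: e)
          ultimately show ?thesis using h1 Ta Tb Tab by linarith
        qed
      next
        case False
        with y have bb: "b = 2*y+1" by simp
        have e: "a + b = 2*(x+y+1)" using ax bb by simp
        have Tab: "int (TT (a+b)) = 2 * int (TT (x+y+1))" using TT_even'[of "x+y+1" "a+b"] e by simp
        show ?thesis
        proof (cases "x = 0 \<or> y = 0")
          case True
          show ?thesis
          proof (cases "x = 0")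
            case x0: True
            show ?thesis
            proof (cases "y = 0")
              case True then show ?thesis using x0 ax bb by simp
            next
              case False
              have h: "int (TT (y+1)) \<le> int (TT y) + int (TT 1) + \<bar>int y - int 1\<bar>"
                using less(1)[of y 1] bb False ax x0 by simp
              have Tb: "int (TT b) = int (TT y) + int (TT (y+1)) + 1" using TT_odd'[of y b] False bb by simp
              have "\<bar>int a - int b\<bar> = 2 * int y" using ax bb x0 by simp
              moreover have "\<bar>int y - int 1\<bar> = int y - 1" using False by simp
              ultimately show ?thesis using h Tb Tab x0 ax by simp
            qed
          next
            case False
            with True have y0: "y = 0" by simp
            have h: "int (TT (x+1)) \<le> int (TT x) + int (TT 1) + \<bar>int x - int 1\<bar>"
              using less(1)[of x 1] ax False bb y0 by simp
            have Ta: "int (TT a) = int (TT x) + int (TT (x+1)) + 1" using TT_odd'[of x a] False ax by simp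
            have "\<bar>int a - int b\<bar> = 2 * int x" using ax bb y0 by simp
            moreover have "\<bar>int x - int 1\<bar> = int x - 1" using False by simp
            ultimately show ?thesis using h Ta Tab y0 bb by simp
          qed
        next
          case False
          then have x1: "x \<ge> 1" and y1: "y \<ge> 1" by auto
          have h1: "int (TT (x+(y+1))) \<le> int (TT x) + int (TT (y+1)) + \<bar>int x - int (y+1)\<bar>"
            using less(1)[of x "y+1"] ax bb by simp
          have h2: "int (TT ((x+1)+y)) \<le> int (TT (x+1)) + int (TT y) + \<bar>int (x+1) - int y\<bar>"
            using less(1)[of "x+1" y] ax bb by simp
          have Ta: "int (TT a) = int (TT x) + int (TT (x+1)) + 1" using TT_odd' x1 ax by blast
          have Tb: "int (TT b) = int (TT y) + int (TT (y+1)) + 1" using TT_odd' y1 bb by blast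
          have e1: "x + (y+1) = x + y + 1" "x + 1 + y = x + y + 1" by simp_all
          have "\<bar>int x - int (y+1)\<bar> + \<bar>int (x+1) - int y\<bar> \<le> \<bar>int a - int b\<bar> + 2"
            using ax bb by simp
          moreover from h1 have "int (TT (x+y+1)) \<le> int (TT x) + int (TT (y+1)) + \<bar>int x - int (y+1)\<bar>"
            by (simp only: e1)
          moreover from h2 have "int (TT (x+y+1)) \<le> int (TT (x+1)) + int (TT y) + \<bar>int (x+1) - int y\<bar>"
            by (simp only: e1)
          ultimately show ?thesis using Ta Tb Tab by linarith
        qed
      qed
    qed
  qed
qed

function bal :: "nat \<Rightarrow> bintree" where
  "bal n = (if n \<le> 1 then Leaf else Node (bal (n div 2)) (bal (n - n div 2)))"
  by pat_completeness auto
termination by (relation "Wellfounded.measure (\<lambda>n. n)") auto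

declare bal.simps [simp del]

lemma bal_both: "n \<ge> 1 \<Longrightarrow> leaves (bal n) = n \<and> colless (bal n) = TT n"
proof (induction n rule: less_induct)
  case (less n)
  show ?case
  proof (cases "n = 1")
    case True then show ?thesis by (simp add: bal.simps)
  next
    case False
    with less.prems have n2: "n \<ge> 2" by simp
    obtain m where m: "n = 2*m \<or> n = 2*m+1" by (metis oddE evenE)
    have m1: "m \<ge> 1" using m n2 by auto
    have b: "bal n = Node (bal (n div 2)) (bal (n - n div 2))" using n2 by (simp add: bal.simps)
    show ?thesis
    proof (cases "n = 2*m")
      case True
      have d: "n div 2 = m" "n - n div 2 = m" using True by simp_all
      have "leaves (bal m) = m \<and> colless (bal m) = TT m" using less.IH[of m] m1 True by simp
      then show ?thesis using b d True TT_even[OF m1] by simp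
    next
      case False
      with m have nn: "n = 2*m+1" by simp
      have d: "n div 2 = m" "n - n div 2 = m+1" using nn by simp_all
      have "leaves (bal m) = m \<and> colless (bal m) = TT m" using less.IH[of m] m1 nn by simp
      moreover have "leaves (bal (m+1)) = m+1 \<and> colless (bal (m+1)) = TT (m+1)"
        using less.IH[of "m+1"] m1 nn by simp
      ultimately show ?thesis using b d nn TT_odd[OF m1] by simp
    qed
  qed
qed

lemma leaves_pos: "leaves t \<ge> 1"
  by (induction t) auto

lemma colless_lower: "int (TT (leaves t)) \<le> int (colless t)"
proof (induction t)
  case Leaf then show ?case by simp
next
  case (Node l r)
  have "int (TT (leaves l + leaves r)) \<le> int (TT (leaves l)) + int (TT (leaves r))
     + \<bar>int (leaves l) - int (leaves r)\<bar>" by (rule TT_sub)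
  then show ?case using Node by simp
qed

lemma colless_upper: "colless t \<le> leaves t ^ 2"
proof (induction t)
  case Leaf then show ?case by simp
next
  case (Node l r)
  have l1: "leaves l \<ge> 1" and r1: "leaves r \<ge> 1" by (rule leaves_pos)+
  have "nat \<bar>int (leaves l) - int (leaves r)\<bar> \<le> leaves l + leaves r" by simp
  also have "\<dots> \<le> 2 * (leaves l * leaves r)"
  proof -
    have "leaves l \<le> leaves l * leaves r" using r1 by simp
    moreover have "leaves r \<le> leaves l * leaves r" using l1 by simp
    ultimately show ?thesis by linarith
  qed
  finally have "nat \<bar>int (leaves l) - int (leaves r)\<bar> \<le> 2 * (leaves l * leaves r)" .
  then show ?case using Node by (simp add: power2_eq_square algebra_simps)
qed

lemma min_colless_TT: "n \<ge> 1 \<Longrightarrow> min_colless n = TT n"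
  unfolding min_colless_def
proof (rule Min_eqI)
  show "finite {colless t |t. leaves t = n}"
    by (rule finite_subset[of _ "{..n^2}"]) (auto intro: colless_upper)
  show "TT n \<le> y" if "y \<in> {colless t |t. leaves t = n}" for y
    using that colless_lower by fastforce
  assume "n \<ge> 1"
  then have "leaves (bal n) = n" "colless (bal n) = TT n" using bal_both[of n] by auto
  then show "TT n \<in> {colless t |t. leaves t = n}" by (intro CollectI exI[of _ "bal n"]) simp
qed

lemma dist_int_eq: "of_int q \<le> x \<Longrightarrow> x \<le> of_int q + 1 \<Longrightarrow> dist_int x = min (x - of_int q) (of_int q + 1 - x)"
  unfolding dist_int_def
proof (rule cInf_eq_minimum)
  assume h: "of_int q \<le> x" "x \<le> of_int q + 1"
  show "min (x - of_int q) (of_int q + 1 - x) \<in> range (\<lambda>z::int. \<bar>x - of_int z\<bar>)"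
  proof (cases "x - of_int q \<le> of_int q + 1 - x")
    case True
    then have "min (x - of_int q) (of_int q + 1 - x) = \<bar>x - of_int q\<bar>" using h by simp
    then show ?thesis by blast
  next
    case False
    then have "min (x - of_int q) (of_int q + 1 - x) = \<bar>x - of_int (q+1)\<bar>" using h by simp
    then show ?thesis by blast
  qed
  fix y assume "y \<in> range (\<lambda>z::int. \<bar>x - of_int z\<bar>)"
  then obtain z where z: "y = \<bar>x - of_int z\<bar>" by blast
  show "min (x - of_int q) (of_int q + 1 - x) \<le> y"
  proof (cases "z \<le> q")
    case True
    then have "real_of_int z \<le> of_int q" by simp
    then show ?thesis using z h by simp
  next
    case False
    then have "real_of_int z \<ge> of_int q + 1" by simp
    then show ?thesis using z h by simp
  qed
qed

lemma hh_real: "real (hh j n) = dist_int (real n / 2^j) * 2^j"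
proof -
  define P where "P = (2::nat)^j"
  have P0: "P > 0" unfolding P_def by simp
  define q where "q = n div P"
  define r where "r = n mod P"
  have rP: "r < P" unfolding r_def using P0 by simp
  have nq: "n = q * P + r" unfolding q_def r_def by simp
  have Pr: "real P > 0" using P0 by simp
  have x: "real n / real P = of_int (int q) + real r / real P"
    using Pr by (simp add: nq add_divide_distrib)
  have "real r / real P \<le> 1" using rP by simp
  then have d: "dist_int (real n / real P) = min (real r / real P) (1 - real r / real P)"
    using dist_int_eq[of "int q" "real n / real P"] x by simp
  have "min (real r / real P) (1 - real r / real P) * real P
      = min (real r / real P * real P) ((1 - real r / real P) * real P)"
    using Pr by (simp add: min_mult_distrib_right)
  also have "\<dots> = min (real r) (real P - real r)"
    using Pr by (simp add: left_diff_distrib)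
  finally have m: "min (real r / real P) (1 - real r / real P) * real P = min (real r) (real P - real r)" .
  have "real (hh j n) = min (real r) (real P - real r)"
    unfolding hh_def P_def[symmetric] r_def[symmetric] using rP by (simp add: of_nat_diff)
  with m d have "real (hh j n) = dist_int (real n / real P) * real P" by simp
  then show ?thesis unfolding P_def by simp
qed

theorem theorem2:
  fixes n :: nat
  assumes "n \<ge> 1"
  defines "k \<equiv> \<lceil>log 2 (real n)\<rceil>"
  shows "real (min_colless n) =
    (\<Sum>i\<in>{0..k - 2}. dist_int ((2::real) powi (i - k + 1) * real n) / (2::real) powi (i - k + 1))"
proof -
  have n0: "real n > 0" using assms(1) by simp
  have "log 2 (real n) \<ge> 0" using assms(1) by simp
  then have k0: "k \<ge> 0" unfolding k_def by simp
  define K where "K = nat k"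
  have kK: "k = int K" using k0 unfolding K_def by simp
  have setK: "{j. (2::nat)^j < n} = {..<K}"
  proof (rule set_eqI)
    fix j :: nat
    have "((2::nat)^j < n) = (real ((2::nat)^j) < real n)" by (simp only: of_nat_less_iff)
    also have "\<dots> = (2 powr real j < real n)" by (simp add: powr_realpow)
    also have "\<dots> = (real j < log 2 (real n))" using less_log_iff[of 2 "real n" "real j"] n0 by simp
    also have "\<dots> = (int j < k)" unfolding k_def using less_ceiling_iff[of "int j" "log 2 (real n)"] by simp
    also have "\<dots> = (j < K)" using kK by simp
    finally show "j \<in> {j. (2::nat)^j < n} \<longleftrightarrow> j \<in> {..<K}" by simp
  qed
  have "real (min_colless n) = real (TT n)" using min_colless_TT[OF assms(1)] by simp
  also have "\<dots> = (\<Sum>j<K. real (hh j n))" unfolding TT_def setK by simp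
  also have "\<dots> = (\<Sum>j\<in>{1..<K}. real (hh j n))"
  proof (rule sum.mono_neutral_right)
    show "finite {..<K}" by simp
    show "{1..<K} \<subseteq> {..<K}" by auto
    show "\<forall>i\<in>{..<K} - {1..<K}. real (hh i n) = 0" by (auto simp: not_le)
  qed
  also have "\<dots> = (\<Sum>i\<in>{0..k - 2}. dist_int ((2::real) powi (i - k + 1) * real n) / (2::real) powi (i - k + 1))"
  proof (rule sum.reindex_bij_witness[where j = "\<lambda>b. k - 1 - int b" and i = "\<lambda>a. nat (k - 1 - a)"])
    fix a assume a: "a \<in> {0..k-2}"
    show "k - 1 - int (nat (k - 1 - a)) = a" using a by simp
    show "nat (k - 1 - a) \<in> {1..<K}" using a kK by auto
  next
    fix b assume b: "b \<in> {1..<K}"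
    show "nat (k - 1 - (k - 1 - int b)) = b" by simp
    show "k - 1 - int b \<in> {0..k-2}" using b kK by auto
    have aJ: "(k - 1 - int b) - k + 1 = - int b" by simp
    have pw: "(2::real) powi ((k - 1 - int b) - k + 1) = inverse (2^b)" unfolding aJ by (simp add: power_int_minus)
    have "dist_int ((2::real) powi ((k - 1 - int b) - k + 1) * real n) / (2::real) powi ((k - 1 - int b) - k + 1)
        = dist_int (real n / 2^b) * 2^b" unfolding pw by (simp add: divide_inverse mult.commute)
    then show "dist_int ((2::real) powi ((k - 1 - int b) - k + 1) * real n) / (2::real) powi ((k - 1 - int b) - k + 1) = real (hh b n)"
      using hh_real[of b n] by simp
  qed
  finally show ?thesis .
qed

end
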